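(* Let $G(\circ)$, $G(\ast)$ be groups on a set $G$ of even size $n$. Then there are at most $h+2\varphi(n/2)$ elements $a\in G$ with $\mathrm{dist}_a<3$, where $\varphi$ is Euler's totient function.
   Context: $\mathrm{dist}_a=|\{b\in G: a\circ b\ne a\ast b\}|$, $H=\{a\in G:\mathrm{dist}_a=0\}$ and $h=|H|$. *)

theory Defs
  imports "HOL-Algebra.Group" "HOL-Number_Theory.Totient"
begin

definition dist_el :: "('a, 'm1) monoid_scheme \<Rightarrow> ('a, 'm2) monoid_scheme \<Rightarrow> 'a \<Rightarrow> nat" where
  "dist_el G1 G2 a = card {b \<in> carrier G1. a \<otimes>\<^bsub>G1\<^esub> b \<noteq> a \<otimes>\<^bsub>G2\<^esub> b}"

text \<open>H = elements with dist = 0.\<close>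
definition agree_set :: "('a, 'm1) monoid_scheme \<Rightarrow> ('a, 'm2) monoid_scheme \<Rightarrow> 'a set" where
  "agree_set G1 G2 = {a \<in> carrier G1. dist_el G1 G2 a = 0}"

end

theory Submission
  imports Defs "HOL-Algebra.Multiplicative_Group"
begin


lemma funpow_in: "f ` S \<subseteq> S \<Longrightarrow> x \<in> S \<Longrightarrow> (f^^i) x \<in> S"
  by (induction i) auto

lemma walk:
  assumes S: "f ` S \<subseteq> S" "b \<in> S" "c \<in> S"
    and agree: "\<And>x. x \<in> S \<Longrightarrow> x \<noteq> b \<Longrightarrow> x \<noteq> c \<Longrightarrow> g x = f x"
    and gb: "g b = f c"
    and nc: "\<And>i. (f^^i) c \<noteq> b"
    and perc: "\<And>i. (f^^i) c = c \<longleftrightarrow> m dvd i"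
  shows "t < m \<Longrightarrow> (g^^Suc t) b = (f^^Suc t) c"
proof (induction t)
  case 0 then show ?case using gb by simp
next
  case (Suc t)
  have "(g^^Suc (Suc t)) b = g ((f^^Suc t) c)" using Suc by simp
  also have "\<dots> = f ((f^^Suc t) c)"
  proof (rule agree)
    show "(f^^Suc t) c \<in> S" by (rule funpow_in[OF S(1) S(3)])
    show "(f^^Suc t) c \<noteq> b" by (rule nc)
    show "(f^^Suc t) c \<noteq> c"
    proof
      assume "(f^^Suc t) c = c"
      hence "m dvd Suc t" using perc[of "Suc t"] by simp
      hence "m \<le> Suc t" by (rule dvd_imp_le) simp
      thus False using Suc.prems by simp
    qed
  qed
  finally show ?case by simp
qed

lemma back_lem:
  assumes perc: "\<And>i. (f^^i) c = c \<longleftrightarrow> m dvd i" and "m > 0"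
  shows "\<exists>j<m. (f^^j) ((f^^i) c) = c"
proof -
  define j where "j = (m - i mod m) mod m"
  have "(j + i) mod m = ((m - i mod m) + i) mod m" unfolding j_def by (simp add: mod_add_left_eq)
  also have "\<dots> = ((m - i mod m) + i mod m) mod m" by (simp add: mod_add_right_eq)
  also have "\<dots> = m mod m" using assms(2) by (metis le_add_diff_inverse2 mod_less_divisor less_imp_le)
  also have "\<dots> = 0" by simp
  finally have "m dvd (j + i)" by auto
  moreover have "(f^^j) ((f^^i) c) = (f^^(j+i)) c" by (simp add: funpow_add)
  ultimately have "(f^^j) ((f^^i) c) = c" using perc by simp
  moreover have "j < m" using assms(2) by (simp add: j_def)
  ultimately show ?thesis by blast
qed

lemma funpow_apply_add: "(f^^a) ((f^^b) x) = (f^^(a+b)) x"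
  by (simp add: funpow_add)

lemma orbit_cancel:
  assumes perb: "\<And>i. (f^^i) b = b \<longleftrightarrow> m dvd i" and "j \<le> m"
    and eq: "(f^^(j+r)) b = (f^^j) b"
  shows "(f^^r) b = b"
proof -
  have "(f^^(m-j)) ((f^^(j+r)) b) = (f^^(m-j)) ((f^^j) b)" using eq by simp
  hence "(f^^(m - j + (j + r))) b = (f^^(m - j + j)) b" by (simp only: funpow_apply_add)
  hence "(f^^(m + r)) b = (f^^m) b" using \<open>j \<le> m\<close> by simp
  moreover have "(f^^r) ((f^^m) b) = (f^^(m+r)) b" by (simp only: funpow_apply_add add.commute)
  ultimately have "(f^^r) ((f^^m) b) = (f^^m) b" by simp
  moreover have "(f^^m) b = b" using perb by simp
  ultimately show ?thesis by simp
qed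

lemma caseA:
  assumes fin: "finite S" and n: "n = card S"
    and S: "f ` S \<subseteq> S" "b \<in> S" "c \<in> S" and bc: "b \<noteq> c"
    and agree: "\<And>x. x \<in> S \<Longrightarrow> x \<noteq> b \<Longrightarrow> x \<noteq> c \<Longrightarrow> g x = f x"
    and gb: "g b = f c" and gc: "g c = f b"
    and perf: "\<And>x i. x \<in> S \<Longrightarrow> (f^^i) x = x \<longleftrightarrow> m dvd i"
    and perg: "\<And>x i. x \<in> S \<Longrightarrow> (g^^i) x = x \<longleftrightarrow> k dvd i"
    and m0: "m > 0" and kn: "k \<le> n"
    and nbc: "\<And>i. (f^^i) b \<noteq> c"
  shows "n = 2*m \<and> k = n"
proof -
  have ncb: "(f^^i) c \<noteq> b" for i
  proof
    assume h: "(f^^i) c = b"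
    obtain j where "(f^^j) ((f^^i) c) = c" using back_lem[of f c m i] perf[OF S(3)] m0 by blast
    with h nbc show False by simp
  qed
  have agree': "\<And>x. x \<in> S \<Longrightarrow> x \<noteq> c \<Longrightarrow> x \<noteq> b \<Longrightarrow> g x = f x" using agree by blast
  have w1: "t < m \<Longrightarrow> (g^^Suc t) b = (f^^Suc t) c" for t
    by (rule walk[OF S agree gb ncb perf[OF S(3)]])
  have w2: "t < m \<Longrightarrow> (g^^Suc t) c = (f^^Suc t) b" for t
    by (rule walk[OF S(1) S(3) S(2) agree' gc nbc perf[OF S(2)]])
  have msuc: "m = Suc (m - 1)" using m0 by simp
  have gm: "(g^^m) b = c"
    using w1[of "m-1"] m0 perf[OF S(3), of m] msuc by (metis diff_less zero_less_one dvd_refl)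
  have "(g^^(m+m)) b = (g^^m) c" using gm by (simp add: funpow_add)
  also have "\<dots> = b"
    using w2[of "m-1"] m0 perf[OF S(2), of m] msuc by (metis diff_less zero_less_one dvd_refl)
  finally have "k dvd (m+m)" using perg[OF S(2)] by blast
  moreover have "0 < m + m" using m0 by simp
  ultimately have "k \<le> m + m" by (rule dvd_imp_le)
  hence k2: "k \<le> 2*m" by simp
  have k0: "k > 0" using \<open>k dvd (m+m)\<close> m0 by (cases k) auto
  have gk: "(g^^k) b = b" using perg[OF S(2)] by simp
  have "\<not> k < 2*m"
  proof
    assume "k < 2*m"
    show False
    proof (cases "k \<le> m")
      case True
      then have "(g^^Suc (k-1)) b = (f^^Suc (k-1)) c" using w1[of "k-1"] k0 by simp
      then have "(f^^k) c = b" using k0 gk by simp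
      with ncb show False by blast
    next
      case False
      have "(g^^k) b = (g^^(k-m)) ((g^^m) b)"
        unfolding funpow_apply_add using False by simp
      also have "\<dots> = (g^^Suc (k-m-1)) c" using gm False by (simp del: funpow.simps add: Suc_diff_Suc)
      also have "\<dots> = (f^^Suc (k-m-1)) b" using w2[of "k-m-1"] \<open>k < 2*m\<close> by simp
      finally have "(f^^Suc (k-m-1)) b = b" using gk by simp
      hence "m dvd Suc (k-m-1)" using perf[OF S(2)] by blast
      moreover have "Suc (k-m-1) < m" using False \<open>k < 2*m\<close> by simp
      ultimately show False by (auto dest: dvd_imp_le)
    qed
  qed
  with k2 have k2m: "k = 2*m" by simp
  have cover: "S \<subseteq> (\<lambda>j. (f^^j) b) ` {..<m} \<union> (\<lambda>j. (f^^j) c) ` {..<m}"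
  proof
    fix x assume x: "x \<in> S"
    show "x \<in> (\<lambda>j. (f^^j) b) ` {..<m} \<union> (\<lambda>j. (f^^j) c) ` {..<m}"
    proof (rule ccontr)
      assume nx: "x \<notin> (\<lambda>j. (f^^j) b) ` {..<m} \<union> (\<lambda>j. (f^^j) c) ` {..<m}"
      have avoid: "(f^^i) x \<noteq> b \<and> (f^^i) x \<noteq> c" for i
      proof -
        obtain j where "j < m" "(f^^j) ((f^^i) x) = x" using back_lem[of f x m i] perf[OF x] m0 by blast
        then show ?thesis using nx by (metis UnI1 UnI2 image_eqI lessThan_iff)
      qed
      have eqi: "(g^^i) x = (f^^i) x" for i
      proof (induction i)
        case (Suc i)
        have "(g^^Suc i) x = g ((f^^i) x)" using Suc by simp
        also have "\<dots> = f ((f^^i) x)" using agree[OF funpow_in[OF S(1) x]] avoid by blast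
        finally show ?case by simp
      qed simp
      have "(g^^m) x = x" using eqi perf[OF x] by simp
      hence "k dvd m" using perg[OF x] by blast
      with k2m m0 show False by (auto dest: dvd_imp_le)
    qed
  qed
  have "n \<le> card ((\<lambda>j. (f^^j) b) ` {..<m} \<union> (\<lambda>j. (f^^j) c) ` {..<m})"
    unfolding n by (rule card_mono[OF _ cover]) simp
  also have "\<dots> \<le> card ((\<lambda>j. (f^^j) b) ` {..<m}) + card ((\<lambda>j. (f^^j) c) ` {..<m})"
    by (rule card_Un_le)
  also have "\<dots> \<le> m + m" by (intro add_mono card_image_le[THEN order_trans]) auto
  finally show ?thesis using k2m kn by simp
qed

lemma caseB:
  assumes S: "f ` S \<subseteq> S" "b \<in> S" "c \<in> S" and bc: "b \<noteq> c"
    and agree: "\<And>x. x \<in> S \<Longrightarrow> x \<noteq> b \<Longrightarrow> x \<noteq> c \<Longrightarrow> g x = f x"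
    and gb: "g b = f c"
    and perf: "\<And>x i. x \<in> S \<Longrightarrow> (f^^i) x = x \<longleftrightarrow> m dvd i"
    and m0: "m > 0"
    and ex: "(f^^i) b = c"
  shows "(g^^t) b \<noteq> c"
proof -
  define j where "j = i mod m"
  have "(f^^i) b = (f^^j) ((f^^(m * (i div m))) b)"
    unfolding j_def funpow_apply_add by (simp add: mod_mult_div_eq)
  also have "(f^^(m * (i div m))) b = b" using perf[OF S(2)] by simp
  finally have fj: "(f^^j) b = c" using ex by simp
  have jm: "j < m" using m0 by (simp add: j_def)
  have j0: "j > 0" using fj bc by (cases j) auto
  define p where "p = m - j"
  have p0: "p > 0" using jm by (simp add: p_def)
  have neqc: "(f^^(j+r)) b \<noteq> c" if "0 < r" "r < p" for r
  proof
    assume "(f^^(j+r)) b = c"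
    hence "(f^^r) b = b" using orbit_cancel[of f b m j r] perf[OF S(2)] jm fj by simp
    hence "m dvd r" using perf[OF S(2)] by blast
    with that show False by (auto simp: p_def dest: dvd_imp_le)
  qed
  have walkB: "s < p \<Longrightarrow> (g^^Suc s) b = (f^^(j + Suc s)) b" for s
  proof (induction s)
    case 0 then show ?case using gb fj by simp
  next
    case (Suc s)
    have "(g^^Suc (Suc s)) b = g ((f^^(j + Suc s)) b)" using Suc by simp
    also have "\<dots> = f ((f^^(j + Suc s)) b)"
    proof (rule agree)
      show "(f^^(j + Suc s)) b \<in> S" by (rule funpow_in[OF S(1) S(2)])
      show "(f^^(j + Suc s)) b \<noteq> c" using neqc[of "Suc s"] Suc.prems by simp
      show "(f^^(j + Suc s)) b \<noteq> b"
      proof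
        assume "(f^^(j + Suc s)) b = b"
        hence "m dvd (j + Suc s)" using perf[OF S(2)] by blast
        moreover have "j + Suc s < m" using Suc.prems by (simp add: p_def)
        ultimately show False by (auto dest: dvd_imp_le)
      qed
    qed
    finally show ?case by simp
  qed
  have "(g^^Suc (p-1)) b = (f^^(j + Suc (p-1))) b" using walkB[of "p-1"] p0 by simp
  moreover have "Suc (p-1) = p" "j + p = m" using p0 jm by (auto simp: p_def)
  ultimately have gp: "(g^^p) b = b" using perf[OF S(2), of m] by simp
  have gpq: "(g^^(p*q)) b = b" for q
    by (induction q) (simp_all add: funpow_add gp comp_def)
  have "(g^^t) b = (g^^(t mod p)) ((g^^(p * (t div p))) b)"
    unfolding funpow_apply_add by (simp add: mod_mult_div_eq)
  also have "\<dots> = (g^^(t mod p)) b" using gpq by simp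
  finally have gt: "(g^^t) b = (g^^(t mod p)) b" .
  have tp: "t mod p < p" using p0 by simp
  show ?thesis
  proof (cases "t mod p")
    case 0 then show ?thesis using gt bc by simp
  next
    case (Suc s)
    then have "(g^^t) b = (f^^(j + Suc s)) b" using gt walkB[of s] tp by simp
    then show ?thesis using neqc[of "Suc s"] tp Suc by simp
  qed
qed

lemma orders:
  assumes fin: "finite S" and n: "n = card S"
    and Sf: "f ` S \<subseteq> S" and Sg: "g ` S \<subseteq> S" and S: "b \<in> S" "c \<in> S" and bc: "b \<noteq> c"
    and agree: "\<And>x. x \<in> S \<Longrightarrow> x \<noteq> b \<Longrightarrow> x \<noteq> c \<Longrightarrow> g x = f x"
    and gb: "g b = f c" and gc: "g c = f b"
    and perf: "\<And>x i. x \<in> S \<Longrightarrow> (f^^i) x = x \<longleftrightarrow> m dvd i"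
    and perg: "\<And>x i. x \<in> S \<Longrightarrow> (g^^i) x = x \<longleftrightarrow> k dvd i"
    and m0: "m > 0" and k0: "k > 0" and mn: "m \<le> n" and kn: "k \<le> n"
  shows "(n = 2*m \<and> k = n) \<or> (n = 2*k \<and> m = n)"
proof (cases "\<forall>i. (f^^i) b \<noteq> c")
  case True
  then show ?thesis using caseA[OF fin n Sf S bc agree gb gc perf perg m0 kn] by blast
next
  case False
  then obtain i where "(f^^i) b = c" by blast
  from caseB[OF Sf S bc agree gb perf m0 this]
  have "\<And>t. (g^^t) b \<noteq> c" .
  moreover have agree': "\<And>x. x \<in> S \<Longrightarrow> x \<noteq> b \<Longrightarrow> x \<noteq> c \<Longrightarrow> f x = g x" using agree by metis
  ultimately show ?thesis
    using caseA[OF fin n Sg S bc agree' gc[symmetric] gb[symmetric] perg perf k0 mn] by blast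
qed



lemma (in group) lcancel: "x \<in> carrier G \<Longrightarrow> y \<in> carrier G \<Longrightarrow> z \<in> carrier G \<Longrightarrow> (x \<otimes> y = x \<otimes> z) = (y = z)"
  by (metis Units_eq Units_l_cancel)

lemma (in group) funpow_lmult:
  assumes "a \<in> carrier G" "x \<in> carrier G"
  shows "((\<lambda>y. a \<otimes> y)^^i) x = a [^] i \<otimes> x"
proof (induction i)
  case 0 then show ?case using assms by simp
next
  case (Suc i)
  have "((\<lambda>y. a \<otimes> y)^^Suc i) x = a \<otimes> (a [^] i \<otimes> x)" using Suc by simp
  also have "\<dots> = (a \<otimes> a [^] i) \<otimes> x" using assms by (simp add: m_assoc)
  also have "a \<otimes> a [^] i = a [^] Suc i" using nat_pow_Suc2[OF assms(1)] by simp
  finally show ?case .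
qed

lemma (in group) period_lmult:
  assumes "a \<in> carrier G" "x \<in> carrier G"
  shows "(((\<lambda>y. a \<otimes> y)^^i) x = x) = (ord a dvd i)"
  using assms by (simp add: funpow_lmult pow_eq_id)

lemma (in group) count_ord:
  assumes fin: "finite (carrier G)" and g: "g \<in> carrier G" and og: "ord g = order G"
    and d: "d dvd order G"
  shows "card {x \<in> carrier G. ord x = d} \<le> totient d"
proof -
  define n where "n = order G"
  have n0: "n > 0" using fin order_gt_0_iff_finite n_def by blast
  have d0: "d > 0" using d n0 n_def by (cases d) auto
  have sub: "(\<lambda>k. g [^] k) ` {..<n} \<subseteq> carrier G" using g by auto
  have "inj_on (\<lambda>k. g [^] k) {0..ord g - 1}" by (rule ord_inj[OF g])
  moreover have "{0..ord g - 1} = {..<n}" using og n0 n_def by auto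
  ultimately have inj: "inj_on (\<lambda>k. g [^] k) {..<n}" by simp
  have "card ((\<lambda>k. g [^] k) ` {..<n}) = n" using card_image[OF inj] by simp
  hence carr: "(\<lambda>k. g [^] k) ` {..<n} = carrier G"
    using card_seteq[OF fin sub] n_def order_def by (metis order_refl)
  define q where "q = n div d"
  have nq: "n = q * d" using d n_def q_def by simp
  have q0: "q > 0" using nq n0 by (cases q) auto
  define h where "h = g [^] q"
  have hc: "h \<in> carrier G" using g h_def by simp
  have "ord g = q * d" using og n_def nq by simp
  hence "q dvd ord g" "ord g div q = d" using q0 by auto
  hence oh: "ord h = d" unfolding h_def using ord_pow[OF g, of q] q0 by simp
  have "{x \<in> carrier G. ord x = d} \<subseteq> (\<lambda>j. h [^] j) ` totatives d"
  proof
    fix x assume x: "x \<in> {x \<in> carrier G. ord x = d}"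
    then obtain k where k: "k < n" "x = g [^] k" using carr by auto
    have "x [^] d = \<one>" using x by auto
    hence "g [^] (k * d) = \<one>" using k g by (simp add: nat_pow_pow)
    hence "n dvd k * d" using pow_eq_id[OF g] og n_def by simp
    hence "q dvd k" using nq d0 by simp
    then obtain j where j: "k = q * j" by blast
    have xj: "x = h [^] j" using k j g by (simp add: h_def nat_pow_pow)
    have jd: "j < d" using k(1) j nq q0 by simp
    show "x \<in> (\<lambda>j. h [^] j) ` totatives d"
    proof (cases "j = 0")
      case True
      then have "x = \<one>" using xj by simp
      hence "d = 1" using x by simp
      moreover have "h [^] (1::nat) = \<one>" using hc oh \<open>d = 1\<close> by (metis pow_ord_eq_1)
      ultimately show ?thesis using \<open>x = \<one>\<close> by (auto simp: totatives_def intro!: image_eqI[of _ _ 1])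
    next
      case False
      have "ord x = d div gcd d j" using xj ord_pow_gen[OF hc, of j] False oh by simp
      hence "gcd d j = 1" using x d0 div_eq_dividend_iff by auto
      hence "j \<in> totatives d" using False jd by (auto simp: totatives_def coprime_iff_gcd_eq_1 gcd.commute)
      thus ?thesis using xj by blast
    qed
  qed
  hence "card {x \<in> carrier G. ord x = d} \<le> card ((\<lambda>j. h [^] j) ` totatives d)"
    by (intro card_mono) auto
  also have "\<dots> \<le> card (totatives d)" by (rule card_image_le) simp
  finally show ?thesis by (simp add: totient_def)
qed



lemma dist_orders:
  assumes gr1: "group G1" and gr2: "group G2" and C: "carrier G1 = carrier G2"
    and fin: "finite (carrier G1)" and n: "n = card (carrier G1)"
    and a: "a \<in> carrier G1" and d0: "dist_el G1 G2 a \<noteq> 0" and d3: "dist_el G1 G2 a < 3"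
  shows "(group.ord G1 a = n \<and> group.ord G2 a = n div 2) \<or> (group.ord G2 a = n \<and> group.ord G1 a = n div 2)"
proof -
  interpret G1: group G1 by (rule gr1)
  interpret G2: group G2 by (rule gr2)
  define S where "S = {b \<in> carrier G1. a \<otimes>\<^bsub>G1\<^esub> b \<noteq> a \<otimes>\<^bsub>G2\<^esub> b}"
  have finS: "finite S" using fin S_def by simp
  have cS: "card S = dist_el G1 G2 a" by (simp add: S_def dist_el_def)
  have a2: "a \<in> carrier G2" using a C by simp
  have partner: "\<exists>c\<in>S. c \<noteq> b \<and> a \<otimes>\<^bsub>G2\<^esub> c = a \<otimes>\<^bsub>G1\<^esub> b" if b: "b \<in> S" for b
  proof -
    have bC: "b \<in> carrier G1" using b S_def by simp
    have ab: "a \<otimes>\<^bsub>G1\<^esub> b \<in> carrier G2" using bC a C by (metis G1.m_closed)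
    define c where "c = inv\<^bsub>G2\<^esub> a \<otimes>\<^bsub>G2\<^esub> (a \<otimes>\<^bsub>G1\<^esub> b)"
    have c2: "c \<in> carrier G2" using ab a2 c_def by simp
    have ac: "a \<otimes>\<^bsub>G2\<^esub> c = a \<otimes>\<^bsub>G1\<^esub> b"
      unfolding c_def using ab a2 by (simp add: G2.m_assoc[symmetric])
    have cb: "c \<noteq> b" using ac b S_def by auto
    have c1: "c \<in> carrier G1" using c2 C by simp
    have "a \<otimes>\<^bsub>G1\<^esub> c \<noteq> a \<otimes>\<^bsub>G1\<^esub> b" using G1.lcancel[OF a c1 bC] cb by simp
    hence "c \<in> S" using ac c1 S_def by simp
    thus ?thesis using cb ac by blast
  qed
  have "S \<noteq> {}" using cS d0 by auto
  then obtain b where b: "b \<in> S" by blast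
  then obtain c where c: "c \<in> S" "c \<noteq> b" and gc: "a \<otimes>\<^bsub>G2\<^esub> c = a \<otimes>\<^bsub>G1\<^esub> b" using partner by blast
  have "S = {b, c}"
  proof (rule card_seteq[symmetric])
    show "finite S" by (rule finS)
    show "{b, c} \<subseteq> S" using b c by simp
    show "card S \<le> card {b, c}" using cS d3 c(2) by simp
  qed
  obtain d where d: "d \<in> S" "d \<noteq> c" and gd: "a \<otimes>\<^bsub>G2\<^esub> d = a \<otimes>\<^bsub>G1\<^esub> c" using partner c(1) by blast
  have "d = b" using d \<open>S = {b, c}\<close> by auto
  with gd have gb: "a \<otimes>\<^bsub>G2\<^esub> b = a \<otimes>\<^bsub>G1\<^esub> c" by simp
  have bC: "b \<in> carrier G1" and cC: "c \<in> carrier G1" using b c S_def by auto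
  have agree: "a \<otimes>\<^bsub>G2\<^esub> x = a \<otimes>\<^bsub>G1\<^esub> x" if "x \<in> carrier G1" "x \<noteq> b" "x \<noteq> c" for x
  proof (rule ccontr)
    assume "a \<otimes>\<^bsub>G2\<^esub> x \<noteq> a \<otimes>\<^bsub>G1\<^esub> x"
    hence "x \<in> S" using that(1) S_def by auto
    thus False using that \<open>S = {b, c}\<close> by auto
  qed
  have ordn1: "group.ord G1 a \<le> n" using G1.ord_le_group_order[OF fin a] n by (simp add: order_def)
  have ordn2: "group.ord G2 a \<le> n" using G2.ord_le_group_order[of a] fin a2 n C by (simp add: order_def)
  have ord1: "group.ord G1 a > 0" using G1.ord_ge_1[OF fin a] by simp
  have ord2: "group.ord G2 a > 0" using G2.ord_ge_1[of a] fin a2 C by simp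
  have res: "(n = 2 * group.ord G1 a \<and> group.ord G2 a = n) \<or> (n = 2 * group.ord G2 a \<and> group.ord G1 a = n)"
  proof (rule orders[of "carrier G1" n "\<lambda>x. a \<otimes>\<^bsub>G1\<^esub> x" "\<lambda>x. a \<otimes>\<^bsub>G2\<^esub> x" b c])
    show "finite (carrier G1)" by (rule fin)
    show "n = card (carrier G1)" by (rule n)
    show "(\<otimes>\<^bsub>G1\<^esub>) a ` carrier G1 \<subseteq> carrier G1" using a by auto
    show "(\<otimes>\<^bsub>G2\<^esub>) a ` carrier G1 \<subseteq> carrier G1" using a2 C by auto
    show "b \<in> carrier G1" "c \<in> carrier G1" by (fact bC, fact cC)
    show "b \<noteq> c" using c(2) by simp
    show "\<And>x. x \<in> carrier G1 \<Longrightarrow> x \<noteq> b \<Longrightarrow> x \<noteq> c \<Longrightarrow> a \<otimes>\<^bsub>G2\<^esub> x = a \<otimes>\<^bsub>G1\<^esub> x" by (rule agree)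
    show "a \<otimes>\<^bsub>G2\<^esub> b = a \<otimes>\<^bsub>G1\<^esub> c" by (rule gb)
    show "a \<otimes>\<^bsub>G2\<^esub> c = a \<otimes>\<^bsub>G1\<^esub> b" by (rule gc)
    show "\<And>x i. x \<in> carrier G1 \<Longrightarrow> (((\<otimes>\<^bsub>G1\<^esub>) a ^^ i) x = x) = (group.ord G1 a dvd i)"
      by (rule G1.period_lmult[OF a])
    show "\<And>x i. x \<in> carrier G1 \<Longrightarrow> (((\<otimes>\<^bsub>G2\<^esub>) a ^^ i) x = x) = (group.ord G2 a dvd i)"
    proof -
      fix x i assume "x \<in> carrier G1"
      hence "x \<in> carrier G2" using C by simp
      thus "(((\<otimes>\<^bsub>G2\<^esub>) a ^^ i) x = x) = (group.ord G2 a dvd i)" by (rule G2.period_lmult[OF a2])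
    qed
  qed (use ord1 ord2 ordn1 ordn2 in auto)
  then show ?thesis by auto
qed

theorem lemma4p15:
  fixes G1 :: "('a, 'm1) monoid_scheme" and G2 :: "('a, 'm2) monoid_scheme" and n :: nat
  assumes "group G1" and "group G2"
    and "carrier G1 = carrier G2"
    and "finite (carrier G1)"
    and "n = card (carrier G1)"
    and "even n"
  shows "card {a \<in> carrier G1. dist_el G1 G2 a < 3}
           \<le> card (agree_set G1 G2) + 2 * totient (n div 2)"
proof -
  note gr1 = assms(1) and gr2 = assms(2) and C = assms(3) and fin = assms(4) and n = assms(5) and ev = assms(6)
  interpret G1: group G1 by (rule gr1)
  interpret G2: group G2 by (rule gr2)
  have fin2: "finite (carrier G2)" using fin C by simp
  have o1: "order G1 = n" using n by (simp add: order_def)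
  have o2: "order G2 = n" using n C by (simp add: order_def)
  have hdvd: "n div 2 dvd n" using ev by auto
  have ndvd: "n dvd n" by simp
  define A where "A = {a \<in> carrier G1. group.ord G1 a = n \<and> group.ord G2 a = n div 2}"
  define B where "B = {a \<in> carrier G1. group.ord G2 a = n \<and> group.ord G1 a = n div 2}"
  have cnt1: "card {x \<in> carrier G1. group.ord G1 x = d} \<le> totient d"
    if "g \<in> carrier G1" "group.ord G1 g = n" "d dvd n" for g d
    using G1.count_ord[OF fin that(1)] that o1 by simp
  have cnt2: "card {x \<in> carrier G2. group.ord G2 x = d} \<le> totient d"
    if "g \<in> carrier G2" "group.ord G2 g = n" "d dvd n" for g d
    using G2.count_ord[OF fin2 that(1)] that o2 by simp
  have tot: "totient n \<le> 2 * totient (n div 2)"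
  proof -
    have "n = 2 * (n div 2)" using ev by simp
    hence "totient n = totient (2 * (n div 2))" by simp
    also have "\<dots> \<le> 2 * totient (n div 2)" by (simp add: totient_double)
    finally show ?thesis .
  qed
  have finA: "finite A" and finB: "finite B" using fin by (auto simp: A_def B_def)
  have AB: "card (A \<union> B) \<le> 2 * totient (n div 2)"
  proof (cases "A = {}")
    case True
    show ?thesis
    proof (cases "B = {}")
      case True
      with \<open>A = {}\<close> show ?thesis by simp
    next
      case False
      then obtain g where g: "g \<in> carrier G2" "group.ord G2 g = n" using C by (auto simp: B_def)
      have "B \<subseteq> {x \<in> carrier G2. group.ord G2 x = n}" using C by (auto simp: B_def)
      hence "card B \<le> card {x \<in> carrier G2. group.ord G2 x = n}" using fin2 by (intro card_mono) auto
      also have "\<dots> \<le> totient n" by (rule cnt2[OF g ndvd])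
      finally show ?thesis using tot \<open>A = {}\<close> by simp
    qed
  next
    case False
    then obtain g1 where g1: "g1 \<in> carrier G1" "group.ord G1 g1 = n" by (auto simp: A_def)
    show ?thesis
    proof (cases "B = {}")
      case True
      have "A \<subseteq> {x \<in> carrier G1. group.ord G1 x = n}" by (auto simp: A_def)
      hence "card A \<le> card {x \<in> carrier G1. group.ord G1 x = n}" using fin by (intro card_mono) auto
      also have "\<dots> \<le> totient n" by (rule cnt1[OF g1 ndvd])
      finally show ?thesis using tot True by simp
    next
      case False
      then obtain g where g: "g \<in> carrier G2" "group.ord G2 g = n" using C by (auto simp: B_def)
      have "A \<subseteq> {x \<in> carrier G2. group.ord G2 x = n div 2}" using C by (auto simp: A_def)
      hence "card A \<le> card {x \<in> carrier G2. group.ord G2 x = n div 2}" using fin2 by (intro card_mono) auto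
      also have "\<dots> \<le> totient (n div 2)" by (rule cnt2[OF g hdvd])
      finally have cA: "card A \<le> totient (n div 2)" .
      have "B \<subseteq> {x \<in> carrier G1. group.ord G1 x = n div 2}" by (auto simp: B_def)
      hence "card B \<le> card {x \<in> carrier G1. group.ord G1 x = n div 2}" using fin by (intro card_mono) auto
      also have "\<dots> \<le> totient (n div 2)" by (rule cnt1[OF g1 hdvd])
      finally have cB: "card B \<le> totient (n div 2)" .
      have "card (A \<union> B) \<le> card A + card B" by (rule card_Un_le)
      with cA cB show ?thesis by simp
    qed
  qed
  have sub: "{a \<in> carrier G1. dist_el G1 G2 a < 3} \<subseteq> agree_set G1 G2 \<union> (A \<union> B)"
  proof
    fix a assume a: "a \<in> {a \<in> carrier G1. dist_el G1 G2 a < 3}"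
    show "a \<in> agree_set G1 G2 \<union> (A \<union> B)"
    proof (cases "dist_el G1 G2 a = 0")
      case True then show ?thesis using a by (simp add: agree_set_def)
    next
      case False
      then have "(group.ord G1 a = n \<and> group.ord G2 a = n div 2) \<or> (group.ord G2 a = n \<and> group.ord G1 a = n div 2)"
        using dist_orders[OF gr1 gr2 C fin n] a by blast
      then show ?thesis using a by (auto simp: A_def B_def)
    qed
  qed
  have "card {a \<in> carrier G1. dist_el G1 G2 a < 3} \<le> card (agree_set G1 G2 \<union> (A \<union> B))"
    using fin finA finB by (intro card_mono[OF _ sub]) (auto simp: agree_set_def)
  also have "\<dots> \<le> card (agree_set G1 G2) + card (A \<union> B)" by (rule card_Un_le)
  finally show ?thesis using AB by simp
qed

end
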